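(* Let $G$ be a finite connected graph with minimum degree at least $2$, and let $w_0(uv)=(d(u)d(v))^{-1/2}$ for each edge $uv$. Then the weighted spectral radius of the universal cover $\widetilde{G}$ of $G$, with the lifted weight $w_0$, satisfies $$\lambda_1(\widetilde{G},w_0)\ge \frac{2\sum_{u\in V(G)}d(u)\sqrt{d(u)-1}}{\sum_{u\in V(G)}d(u)^2}.$$
   Context: $d(u)$ denotes the degree of $u$ in $G$. The universal cover $\widetilde{G}$ of a connected graph $G$ is the (possibly infinite) tree whose vertices are the non-backtracking walks $(v_0,\dots,v_i)$ in $G$ (walks with $v_j\ne v_{j+2}$ for all $j$) starting at a fixed vertex $v_0$, two walks adjacent iff one is a one-step extension of the other; the edge between $(v_0,\dots,v_{i-1})$ and $(v_0,\dots,v_i)$ receives weight $w_0(v_{i-1}v_i)$. The weighted spectral radius $\lambda_1(\widetilde{G},w_0)$ is the spectral radius of the (bounded) weighted adjacency operator of $\widetilde{G}$, whose $(x,y)$-entry is the weight of $xy$ if $xy$ is an edge and $0$ otherwise. *)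

theory Defs
  imports Complex_Main
begin

definition simple_graph :: "'a set \<Rightarrow> ('a \<Rightarrow> 'a \<Rightarrow> bool) \<Rightarrow> bool" where
  "simple_graph V E \<longleftrightarrow> finite V \<and> (\<forall>u v. E u v \<longrightarrow> u \<in> V \<and> v \<in> V)
     \<and> (\<forall>u v. E u v \<longrightarrow> E v u) \<and> (\<forall>u. \<not> E u u)"

definition connected_graph :: "'a set \<Rightarrow> ('a \<Rightarrow> 'a \<Rightarrow> bool) \<Rightarrow> bool" where
  "connected_graph V E \<longleftrightarrow> V \<noteq> {} \<and> (\<forall>u\<in>V. \<forall>v\<in>V. (u, v) \<in> {(x, y). E x y}\<^sup>*)"

definition deg :: "'a set \<Rightarrow> ('a \<Rightarrow> 'a \<Rightarrow> bool) \<Rightarrow> 'a \<Rightarrow> nat" where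
  "deg V E u = card {v \<in> V. E u v}"

definition w0 :: "'a set \<Rightarrow> ('a \<Rightarrow> 'a \<Rightarrow> bool) \<Rightarrow> 'a \<Rightarrow> 'a \<Rightarrow> real" where
  "w0 V E u v = 1 / sqrt (real (deg V E u) * real (deg V E v))"

text \<open>Vertices of the universal cover: non-backtracking walks (as nonempty lists) starting at v0.\<close>
definition ucover :: "('a \<Rightarrow> 'a \<Rightarrow> bool) \<Rightarrow> 'a \<Rightarrow> 'a list set" where
  "ucover E v0 = {xs. xs \<noteq> [] \<and> hd xs = v0
      \<and> (\<forall>i. Suc i < length xs \<longrightarrow> E (xs ! i) (xs ! Suc i))
      \<and> (\<forall>i. i + 2 < length xs \<longrightarrow> xs ! i \<noteq> xs ! (i + 2))}"

definition cover_adj :: "'a list \<Rightarrow> 'a list \<Rightarrow> bool" where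
  "cover_adj x y \<longleftrightarrow> (\<exists>v. y = x @ [v]) \<or> (\<exists>v. x = y @ [v])"

definition cover_op :: "'a set \<Rightarrow> ('a \<Rightarrow> 'a \<Rightarrow> bool) \<Rightarrow> 'a \<Rightarrow> ('a list \<Rightarrow> real) \<Rightarrow> 'a list \<Rightarrow> real" where
  "cover_op V E v0 f x = (if x \<in> ucover E v0 then
      (\<Sum>y\<in>{y \<in> ucover E v0. cover_adj x y}. w0 V E (last x) (last y) * f y) else 0)"

definition supp_fun :: "('b \<Rightarrow> real) \<Rightarrow> 'b set" where
  "supp_fun f = {x. f x \<noteq> 0}"

definition finsupp_vecs :: "'b set \<Rightarrow> ('b \<Rightarrow> real) set" where
  "finsupp_vecs C = {f. finite (supp_fun f) \<and> supp_fun f \<subseteq> C \<and> supp_fun f \<noteq> {}}"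

definition l2norm :: "('b \<Rightarrow> real) \<Rightarrow> real" where
  "l2norm f = sqrt (\<Sum>x\<in>supp_fun f. (f x)\<^sup>2)"

text \<open>Operator norm of A^k on l2, computed on the dense subspace of finitely supported vectors.\<close>
definition cover_pow_norm :: "'a set \<Rightarrow> ('a \<Rightarrow> 'a \<Rightarrow> bool) \<Rightarrow> 'a \<Rightarrow> nat \<Rightarrow> real" where
  "cover_pow_norm V E v0 k =
     (SUP f\<in>finsupp_vecs (ucover E v0). l2norm ((cover_op V E v0 ^^ k) f) / l2norm f)"

text \<open>Spectral radius via Gelfand's formula: r(A) = lim ||A^k||^(1/k) = inf_{k>=1} ||A^k||^(1/k).\<close>
definition cover_spectral_radius :: "'a set \<Rightarrow> ('a \<Rightarrow> 'a \<Rightarrow> bool) \<Rightarrow> 'a \<Rightarrow> real" where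
  "cover_spectral_radius V E v0 = (INF k\<in>{1..}. root k (cover_pow_norm V E v0 k))"

end

theory Submission
  imports Defs "HOL-Analysis.Convex"
begin
definition nbw :: "('a \<Rightarrow> 'a \<Rightarrow> bool) \<Rightarrow> 'a list \<Rightarrow> bool" where
  "nbw E xs \<longleftrightarrow> (\<forall>i. Suc i < length xs \<longrightarrow> E (xs ! i) (xs ! Suc i))
      \<and> (\<forall>i. i + 2 < length xs \<longrightarrow> xs ! i \<noteq> xs ! (i + 2))"

lemma ucover_nbw: "ucover E v0 = {xs. xs \<noteq> [] \<and> hd xs = v0 \<and> nbw E xs}"
  unfolding ucover_def nbw_def by auto

lemma nbw_Nil[simp]: "nbw E []" and nbw_single[simp]: "nbw E [x]"
  by (auto simp: nbw_def)

lemma nbw_two: "nbw E [a, b] \<longleftrightarrow> E a b"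
  by (auto simp: nbw_def less_Suc_eq)

lemma nbw_snoc:
  "nbw E (xs @ [c]) \<longleftrightarrow> nbw E xs \<and> (xs \<noteq> [] \<longrightarrow> E (last xs) c)
     \<and> (2 \<le> length xs \<longrightarrow> last (butlast xs) \<noteq> c)"
proof -
  have L: "xs \<noteq> [] \<Longrightarrow> last xs = xs ! (length xs - 1)" by (simp add: last_conv_nth)
  have B: "last (butlast xs) = xs ! (length xs - 2)" if h2: "2 \<le> length xs"
  proof -
    have ne: "butlast xs \<noteq> []" using h2 by (cases xs rule: rev_cases) auto
    show ?thesis using h2 ne by (subst last_conv_nth) (auto simp: nth_butlast numeral_2_eq_2)
  qed
  show ?thesis
  proof
    assume h: "nbw E (xs @ [c])"
    have 1: "nbw E xs" unfolding nbw_def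
    proof (intro conjI allI impI)
      fix i assume i: "Suc i < length xs"
      have "E ((xs @ [c]) ! i) ((xs @ [c]) ! Suc i)" using h i unfolding nbw_def by simp
      then show "E (xs ! i) (xs ! Suc i)" using i by (simp add: nth_append)
    next
      fix i assume i: "i + 2 < length xs"
      have "(xs @ [c]) ! i \<noteq> (xs @ [c]) ! (i + 2)" using h i unfolding nbw_def by simp
      then show "xs ! i \<noteq> xs ! (i + 2)" using i by (simp add: nth_append)
    qed
    moreover have "xs \<noteq> [] \<longrightarrow> E (last xs) c"
    proof
      assume "xs \<noteq> []"
      then have "Suc (length xs - 1) < length (xs @ [c])" by simp
      then have "E ((xs @ [c]) ! (length xs - 1)) ((xs @ [c]) ! Suc (length xs - 1))"
        using h unfolding nbw_def by blast
      then show "E (last xs) c" using L[OF \<open>xs \<noteq> []\<close>] \<open>xs \<noteq> []\<close>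
        by (simp add: nth_append)
    qed
    moreover have "2 \<le> length xs \<longrightarrow> last (butlast xs) \<noteq> c"
    proof
      assume "2 \<le> length xs"
      then have "length xs - 2 + 2 < length (xs @ [c])" by simp
      then have "(xs @ [c]) ! (length xs - 2) \<noteq> (xs @ [c]) ! (length xs - 2 + 2)"
        using h unfolding nbw_def by blast
      moreover have "Suc (Suc (length xs - 2)) = length xs" using \<open>2 \<le> length xs\<close> by simp
      ultimately show "last (butlast xs) \<noteq> c" using B[OF \<open>2 \<le> length xs\<close>] \<open>2 \<le> length xs\<close>
        by (simp add: nth_append)
    qed
    ultimately show "nbw E xs \<and> (xs \<noteq> [] \<longrightarrow> E (last xs) c) \<and> (2 \<le> length xs \<longrightarrow> last (butlast xs) \<noteq> c)"
      by blast
  next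
    assume h: "nbw E xs \<and> (xs \<noteq> [] \<longrightarrow> E (last xs) c) \<and> (2 \<le> length xs \<longrightarrow> last (butlast xs) \<noteq> c)"
    show "nbw E (xs @ [c])" unfolding nbw_def
    proof (intro conjI allI impI)
      fix i assume i: "Suc i < length (xs @ [c])"
      show "E ((xs @ [c]) ! i) ((xs @ [c]) ! Suc i)"
      proof (cases "Suc i < length xs")
        case True then show ?thesis using h unfolding nbw_def by (auto simp: nth_append)
      next
        case False
        then have ii: "i = length xs - 1" "xs \<noteq> []" using i by auto
        then show ?thesis using h L by (auto simp: nth_append)
      qed
    next
      fix i assume i: "i + 2 < length (xs @ [c])"
      show "(xs @ [c]) ! i \<noteq> (xs @ [c]) ! (i + 2)"
      proof (cases "i + 2 < length xs")
        case True then show ?thesis using h unfolding nbw_def by (auto simp: nth_append)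
      next
        case False
        then have ii: "i = length xs - 2" "2 \<le> length xs" "i + 2 = length xs" using i by auto
        then show ?thesis using h B by (auto simp: nth_append)
      qed
    qed
  qed
qed

lemma nbw_append_prefix: "nbw E (xs @ ys) \<Longrightarrow> nbw E xs"
  by (induction ys rule: rev_induct) (auto simp: nbw_snoc simp flip: append_assoc)

lemma nbw_append:
  assumes "2 \<le> length xs" "last xs = b" "last (butlast xs) = a"
  shows "nbw E (xs @ ys) \<longleftrightarrow> nbw E xs \<and> nbw E (a # b # ys)"
proof (induction ys rule: rev_induct)
  case Nil
  have ne: "xs \<noteq> []" "butlast xs \<noteq> []" using assms by (cases xs rule: rev_cases; auto)+
  have "xs = (butlast (butlast xs) @ [a]) @ [b]"
    using append_butlast_last_id[OF ne(1)] append_butlast_last_id[OF ne(2)] assms by simp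
  then have "nbw E xs \<Longrightarrow> nbw E [a, b]"
    by (metis nbw_snoc last_snoc nbw_two snoc_eq_iff_butlast)
  then show ?case by auto
next
  case (snoc y ys)
  have l1: "last (xs @ ys) = last (a # b # ys)" using assms by (cases ys) auto
  have l2: "last (butlast (xs @ ys)) = last (butlast (a # b # ys))"
    using assms by (cases "ys = []") (auto simp: butlast_append)
  have len: "2 \<le> length (xs @ ys)" "xs @ ys \<noteq> []" using assms by auto
  have "nbw E (xs @ ys @ [y]) \<longleftrightarrow> nbw E ((xs @ ys) @ [y])" by simp
  also have "\<dots> \<longleftrightarrow> nbw E (xs @ ys) \<and> E (last (xs @ ys)) y \<and> last (butlast (xs @ ys)) \<noteq> y"
    using len nbw_snoc[of E "xs @ ys" y] by simp
  also have "\<dots> \<longleftrightarrow> nbw E xs \<and> nbw E (a # b # ys) \<and> E (last (a # b # ys)) y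
      \<and> last (butlast (a # b # ys)) \<noteq> y" using snoc.IH l1 l2 by auto
  also have "\<dots> \<longleftrightarrow> nbw E xs \<and> nbw E ((a # b # ys) @ [y])"
    by (simp only: nbw_snoc) auto
  finally show ?case by simp
qed

lemma w0_sym: "w0 V E u v = w0 V E v u" by (simp add: w0_def mult.commute)
lemma adj_sym: "cover_adj x y = cover_adj y x" by (auto simp: cover_adj_def)

locale G =
  fixes V :: "'a set" and E :: "'a \<Rightarrow> 'a \<Rightarrow> bool" and v0 :: 'a
  assumes sg: "simple_graph V E" and conn: "connected_graph V E"
    and mindeg: "\<forall>u\<in>V. 2 \<le> deg V E u" and v0V: "v0 \<in> V"
begin

abbreviation "C \<equiv> ucover E v0"
abbreviation "A \<equiv> cover_op V E v0"
abbreviation "d \<equiv> deg V E"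
abbreviation "w \<equiv> w0 V E"

definition nb :: "'a \<Rightarrow> 'a set" where "nb u = {v\<in>V. E u v}"
definition CM :: "nat \<Rightarrow> 'a list set" where "CM M = {x\<in>C. length x \<le> M}"
definition Nb :: "'a list \<Rightarrow> 'a list set" where "Nb x = {y\<in>C. cover_adj x y}"

lemma finV: "finite V" using sg by (simp add: simple_graph_def)
lemma E_V: "E u v \<Longrightarrow> u \<in> V \<and> v \<in> V" using sg by (simp add: simple_graph_def)
lemma E_sym: "E u v \<Longrightarrow> E v u" using sg by (simp add: simple_graph_def)
lemma E_irr: "\<not> E u u" using sg by (simp add: simple_graph_def)
lemma finite_nb: "finite (nb u)" using finV by (simp add: nb_def)
lemma d_nb: "d u = card (nb u)" by (simp add: deg_def nb_def)
lemma d_ge2: "u \<in> V \<Longrightarrow> 2 \<le> d u" using mindeg by auto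

lemma C_set: assumes "x \<in> C" shows "set x \<subseteq> V"
proof
  fix z assume "z \<in> set x"
  then obtain i where i: "i < length x" "z = x ! i" by (auto simp: in_set_conv_nth)
  show "z \<in> V"
  proof (cases i)
    case 0 then show ?thesis using assms i v0V by (auto simp: ucover_def hd_conv_nth)
  next
    case (Suc j) then show ?thesis using assms i E_V by (auto simp: ucover_def)
  qed
qed

lemma finite_CM: "finite (CM M)"
proof -
  have "CM M \<subseteq> {xs. set xs \<subseteq> V \<and> length xs \<le> M}" using C_set by (auto simp: CM_def)
  then show ?thesis using finite_lists_length_le[OF finV] finite_subset by blast
qed

lemma C_snoc: assumes "x \<in> C"
  shows "x @ [c] \<in> C \<longleftrightarrow> E (last x) c \<and> (2 \<le> length x \<longrightarrow> last (butlast x) \<noteq> c)"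
  using assms by (auto simp: ucover_nbw nbw_snoc)

lemma C_butlast: assumes "x \<in> C" "2 \<le> length x" shows "butlast x \<in> C"
proof -
  have e: "x = butlast x @ [last x]" using assms(2) by (cases x rule: rev_cases) auto
  have ne: "butlast x \<noteq> []" using assms(2) by (cases x rule: rev_cases) auto
  have hx: "hd x = v0" "nbw E x" using assms(1) by (auto simp: ucover_nbw)
  have "hd (butlast x) = v0" using hx(1) e ne
    by (metis hd_append2)
  moreover have "nbw E (butlast x)" using hx(2) e nbw_append_prefix[of E "butlast x" "[last x]"]
    by simp
  moreover note ne
  ultimately show ?thesis by (simp add: ucover_nbw)
qed

lemma Nb_sub: assumes "x \<in> C" shows "Nb x \<subseteq> insert (butlast x) ((\<lambda>v. x @ [v]) ` V)"
proof
  fix y assume y: "y \<in> Nb x"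
  then have yC: "y \<in> C" and a: "cover_adj x y" by (auto simp: Nb_def)
  show "y \<in> insert (butlast x) ((\<lambda>v. x @ [v]) ` V)"
  proof (cases "\<exists>v. y = x @ [v]")
    case True
    then obtain v where v: "y = x @ [v]" by blast
    then have "v \<in> V" using C_set[OF yC] by auto
    then show ?thesis using v by auto
  next
    case False
    then obtain v where "x = y @ [v]" using a by (auto simp: cover_adj_def)
    then show ?thesis by simp
  qed
qed

lemma finite_Nb: "x \<in> C \<Longrightarrow> finite (Nb x)"
  using Nb_sub finV by (meson finite_imageI finite_insert finite_subset)

lemma card_Nb: assumes "x \<in> C" shows "card (Nb x) \<le> card V + 1"
proof -
  have "card (Nb x) \<le> card (insert (butlast x) ((\<lambda>v. x @ [v]) ` V))"
    using Nb_sub[OF assms] finV by (intro card_mono) auto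
  also have "\<dots> \<le> card ((\<lambda>v. x @ [v]) ` V) + 1" by (simp add: card_insert_le_m1 card_insert_if)
  also have "\<dots> \<le> card V + 1" using card_image_le[OF finV] by simp
  finally show ?thesis .
qed

lemma Nb_len: "y \<in> Nb x \<Longrightarrow> length y \<le> length x + 1 \<and> length x \<le> length y + 1"
  by (auto simp: Nb_def cover_adj_def)

lemma A_in: "x \<in> C \<Longrightarrow> A f x = (\<Sum>y\<in>Nb x. w (last x) (last y) * f y)"
  by (simp add: cover_op_def Nb_def)

lemma A_out: "x \<notin> C \<Longrightarrow> A f x = 0"
  by (simp add: cover_op_def)

lemma supp_A: assumes "supp_fun f \<subseteq> CM M" shows "supp_fun (A f) \<subseteq> CM (Suc M)"
proof
  fix x assume "x \<in> supp_fun (A f)"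
  then have nz: "A f x \<noteq> 0" by (simp add: supp_fun_def)
  then have xC: "x \<in> C" using A_out by blast
  from nz obtain y where y: "y \<in> Nb x" "w (last x) (last y) * f y \<noteq> 0"
    using A_in[OF xC] by (metis (no_types, lifting) sum.neutral)
  then have "y \<in> CM M" using assms by (auto simp: supp_fun_def)
  then show "x \<in> CM (Suc M)" using Nb_len[OF y(1)] xC by (auto simp: CM_def)
qed

lemma A_formula:
  assumes "supp_fun g \<subseteq> CM M" "x \<in> C"
  shows "A g x = (\<Sum>y\<in>CM M. if cover_adj x y then w (last x) (last y) * g y else 0)"
proof -
  have "A g x = (\<Sum>y\<in>Nb x. if cover_adj x y then w (last x) (last y) * g y else 0)"
    using A_in[OF assms(2)] by (auto simp: Nb_def intro!: sum.cong)
  also have "\<dots> = (\<Sum>y\<in>Nb x \<union> CM M. if cover_adj x y then w (last x) (last y) * g y else 0)"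
    using assms by (intro sum.mono_neutral_left finite_UnI finite_Nb finite_CM)
      (auto simp: Nb_def CM_def supp_fun_def)
  also have "\<dots> = (\<Sum>y\<in>CM M. if cover_adj x y then w (last x) (last y) * g y else 0)"
    using assms by (intro sum.mono_neutral_right finite_UnI finite_Nb finite_CM)
      (auto simp: Nb_def CM_def supp_fun_def)
  finally show ?thesis .
qed

lemma sum_supp:
  assumes "supp_fun f \<subseteq> T" "T \<subseteq> S" "finite S"
  shows "(\<Sum>x\<in>S. f x * g x) = (\<Sum>x\<in>T. f x * g x)"
  using assms by (intro sum.mono_neutral_right) (auto simp: supp_fun_def)

lemma self_adj:
  assumes f: "supp_fun f \<subseteq> CM M" and g: "supp_fun g \<subseteq> CM M" and S: "CM M \<subseteq> S" "finite S"
  shows "(\<Sum>x\<in>S. f x * A g x) = (\<Sum>x\<in>S. A f x * g x)"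
proof -
  have "(\<Sum>x\<in>S. f x * A g x) = (\<Sum>x\<in>CM M. f x * A g x)"
    using sum_supp[OF f S] .
  also have "\<dots> = (\<Sum>x\<in>CM M. \<Sum>y\<in>CM M.
      if cover_adj x y then w (last x) (last y) * f x * g y else 0)"
    using A_formula[OF g] by (auto simp: CM_def sum_distrib_left intro!: sum.cong)
  also have "\<dots> = (\<Sum>y\<in>CM M. \<Sum>x\<in>CM M.
      if cover_adj x y then w (last x) (last y) * f x * g y else 0)"
    by (rule sum.swap)
  also have "\<dots> = (\<Sum>y\<in>CM M. A f y * g y)"
    using A_formula[OF f] by (auto simp: CM_def sum_distrib_right adj_sym w0_sym intro!: sum.cong)
  also have "\<dots> = (\<Sum>x\<in>S. A f x * g x)"
    using sum_supp[OF g S, of "A f"] by (simp add: mult.commute)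
  finally show ?thesis .
qed

end

lemma l2norm_on:
  assumes "finite S" "supp_fun f \<subseteq> S"
  shows "l2norm f = sqrt (\<Sum>x\<in>S. (f x)\<^sup>2)"
  unfolding l2norm_def using assms
  by (intro arg_cong[where f=sqrt] sum.mono_neutral_left) (auto simp: supp_fun_def)

lemma CS: "(\<Sum>x\<in>S. f x * g x) \<le> sqrt (\<Sum>x\<in>S. (f x)\<^sup>2) * sqrt (\<Sum>x\<in>S. (g x)\<^sup>2)"
proof -
  have "(\<Sum>x\<in>S. f x * g x)\<^sup>2 \<le> (\<Sum>x\<in>S. (f x)\<^sup>2) * (\<Sum>x\<in>S. (g x)\<^sup>2)"
    by (rule Cauchy_Schwarz_ineq_sum)
  then have "\<bar>\<Sum>x\<in>S. f x * g x\<bar> \<le> sqrt ((\<Sum>x\<in>S. (f x)\<^sup>2) * (\<Sum>x\<in>S. (g x)\<^sup>2))"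
    using real_le_rsqrt by (metis real_sqrt_abs real_sqrt_le_mono)
  then show ?thesis by (simp add: real_sqrt_mult)
qed

context G begin

lemma CM_mono: "M \<le> N \<Longrightarrow> CM M \<subseteq> CM N" by (auto simp: CM_def)

lemma supp_pow: "supp_fun f \<subseteq> CM M \<Longrightarrow> supp_fun ((A ^^ j) f) \<subseteq> CM (M + j)"
  by (induction j) (auto dest: supp_A)

lemma pow_ratio:
  assumes f: "supp_fun f \<subseteq> CM M" and ne: "supp_fun f \<noteq> {}" and r: "0 \<le> r"
    and rq: "r * (\<Sum>x\<in>CM M. (f x)\<^sup>2) \<le> (\<Sum>x\<in>CM M. f x * A f x)"
  shows "r ^ k \<le> l2norm ((A ^^ k) f) / l2norm f"
proof -
  define K where "K = k + 2"
  define S where "S = CM (M + K)"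
  define g where "g j = (A ^^ j) f" for j
  define e where "e j = (\<Sum>x\<in>S. (g j x)\<^sup>2)" for j
  have finS: "finite S" by (simp add: S_def finite_CM)
  have sg: "supp_fun (g j) \<subseteq> CM (M + j)" for j using supp_pow[OF f] by (simp add: g_def)
  have sgS: "j \<le> K \<Longrightarrow> supp_fun (g j) \<subseteq> S" for j
    using sg[of j] CM_mono[of "M + j" "M + K"] by (auto simp: S_def)
  have gS: "g (Suc j) = A (g j)" for j by (simp add: g_def)
  have e0: "e j \<ge> 0" for j by (simp add: e_def sum_nonneg)
  have norm_e: "j \<le> K \<Longrightarrow> l2norm (g j) = sqrt (e j)" for j
    using l2norm_on[OF finS sgS] by (simp add: e_def)
  have logc: "(e (Suc j))\<^sup>2 \<le> e j * e (Suc (Suc j))" if j: "Suc (Suc j) \<le> K" for j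
  proof -
    have "e (Suc j) = (\<Sum>x\<in>S. A (g j) x * g (Suc j) x)"
      by (simp add: e_def gS power2_eq_square)
    also have "\<dots> = (\<Sum>x\<in>S. g j x * A (g (Suc j)) x)"
    proof (rule self_adj[symmetric])
      show "supp_fun (g j) \<subseteq> CM (M + Suc j)" using sg[of j] CM_mono[of "M+j" "M + Suc j"] by auto
      show "supp_fun (g (Suc j)) \<subseteq> CM (M + Suc j)" using sg[of "Suc j"] by simp
      show "CM (M + Suc j) \<subseteq> S" using j CM_mono by (simp add: S_def)
      show "finite S" by (rule finS)
    qed
    also have "\<dots> = (\<Sum>x\<in>S. g j x * g (Suc (Suc j)) x)" by (simp add: gS)
    also have "\<dots> \<le> sqrt (e j) * sqrt (e (Suc (Suc j)))" unfolding e_def by (rule CS)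
    finally have "e (Suc j) \<le> sqrt (e j) * sqrt (e (Suc (Suc j)))" .
    then have "(e (Suc j))\<^sup>2 \<le> (sqrt (e j) * sqrt (e (Suc (Suc j))))\<^sup>2"
      using e0 by (intro power_mono) auto
    then show ?thesis using e0 by (simp add: power_mult_distrib)
  qed
  have P: "e 1 * e j \<le> e 0 * e (Suc j)" if "Suc j \<le> K" for j
    using that
  proof (induction j)
    case 0 then show ?case by simp
  next
    case (Suc j)
    have IH: "e 1 * e j \<le> e 0 * e (Suc j)" using Suc by simp
    have lc: "(e (Suc j))\<^sup>2 \<le> e j * e (Suc (Suc j))" using logc Suc.prems by simp
    show ?case
    proof (cases "e j = 0")
      case True
      then have "(e (Suc j))\<^sup>2 \<le> 0" using lc by simp
      then have "e (Suc j) = 0" by simp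
      then show ?thesis using e0 by simp
    next
      case False
      then have pos: "e j > 0" using e0[of j] by simp
      have "e j * (e 1 * e (Suc j)) = (e 1 * e j) * e (Suc j)" by simp
      also have "\<dots> \<le> (e 0 * e (Suc j)) * e (Suc j)" using IH e0 by (intro mult_right_mono) auto
      also have "\<dots> = e 0 * (e (Suc j))\<^sup>2" by (simp add: power2_eq_square)
      also have "\<dots> \<le> e 0 * (e j * e (Suc (Suc j)))" using lc e0 by (intro mult_left_mono) auto
      also have "\<dots> = e j * (e 0 * e (Suc (Suc j)))" by simp
      finally show ?thesis using pos by (simp add: mult_le_cancel_left)
    qed
  qed
  have Q: "e 1 ^ j \<le> e 0 ^ j * (e j / e 0)" if "j \<le> K" "e 0 > 0" for j
    using that
  proof (induction j)
    case 0 then show ?case by simp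
  next
    case (Suc j)
    have IH: "e 1 ^ j \<le> e 0 ^ j * (e j / e 0)" using Suc by simp
    have "e 1 ^ Suc j = e 1 * e 1 ^ j" by simp
    also have "\<dots> \<le> e 1 * (e 0 ^ j * (e j / e 0))" using IH e0 by (intro mult_left_mono) auto
    also have "\<dots> = e 0 ^ j * (e 1 * e j) / e 0" by simp
    also have "\<dots> \<le> e 0 ^ j * (e 0 * e (Suc j)) / e 0"
      using P[of j] Suc.prems e0 by (intro divide_right_mono mult_left_mono) auto
    also have "\<dots> = e 0 ^ Suc j * (e (Suc j) / e 0)" by simp
    finally show ?case .
  qed
  have fS: "supp_fun f \<subseteq> S" using sgS[of 0] by (simp add: g_def)
  have "e 0 > 0"
  proof -
    obtain x where x: "x \<in> supp_fun f" using ne by blast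
    then have "x \<in> S" using fS by auto
    moreover have "(f x)\<^sup>2 > 0" using x by (simp add: supp_fun_def)
    ultimately have "0 < (\<Sum>x\<in>S. (f x)\<^sup>2)" using finS
      by (intro sum_pos2[where i=x]) auto
    then show ?thesis by (simp add: e_def g_def)
  qed
  have e0S: "e 0 = (\<Sum>x\<in>CM M. (f x)\<^sup>2)"
  proof -
    have sub: "CM M \<subseteq> CM (M + K)" by (rule CM_mono) simp
    show ?thesis unfolding e_def g_def S_def funpow_0
      using f sub by (intro sum.mono_neutral_right finite_CM) (auto simp: supp_fun_def)
  qed
  have ipS: "(\<Sum>x\<in>CM M. f x * A f x) = (\<Sum>x\<in>S. f x * g 1 x)"
    using sum_supp[OF f CM_mono[of M "M+K"] finite_CM] by (simp add: g_def S_def)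
  have "r * e 0 \<le> sqrt (e 0) * sqrt (e 1)"
  proof -
    have "r * e 0 \<le> (\<Sum>x\<in>S. f x * g 1 x)" using rq e0S ipS by simp
    also have "\<dots> \<le> sqrt (e 0) * sqrt (e 1)" unfolding e_def g_def by (simp add: CS)
    finally show ?thesis .
  qed
  moreover have "e 0 = sqrt (e 0) * sqrt (e 0)" using e0[of 0] by simp
  ultimately have "sqrt (e 0) * (r * sqrt (e 0)) \<le> sqrt (e 0) * sqrt (e 1)"
    by (metis mult.left_commute)
  moreover have "sqrt (e 0) > 0" using \<open>e 0 > 0\<close> by simp
  ultimately have "r * sqrt (e 0) \<le> sqrt (e 1)"
    using mult_le_cancel_left_pos by blast
  then have r1: "r \<le> sqrt (e 1) / sqrt (e 0)" using \<open>e 0 > 0\<close> by (simp add: pos_le_divide_eq)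
  have "r ^ k \<le> (sqrt (e 1) / sqrt (e 0)) ^ k" using r r1 by (intro power_mono) auto
  also have "\<dots> = sqrt (e 1 ^ k / e 0 ^ k)" by (simp add: real_sqrt_power real_sqrt_divide power_divide)
  also have "\<dots> \<le> sqrt (e k / e 0)"
  proof -
    have "e 1 ^ k \<le> e 0 ^ k * (e k / e 0)" using Q[of k] \<open>e 0 > 0\<close> by (simp add: K_def)
    then have "e 1 ^ k / e 0 ^ k \<le> e k / e 0" using \<open>e 0 > 0\<close>
      by (simp add: divide_le_eq mult.commute)
    then show ?thesis by simp
  qed
  also have "\<dots> = l2norm ((A ^^ k) f) / l2norm f"
    using norm_e[of k] norm_e[of 0] by (simp add: K_def g_def real_sqrt_divide)
  finally show ?thesis .
qed

end

context G begin

lemma last_C: "x \<in> C \<Longrightarrow> last x \<in> V"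
  using C_set[of x] by (auto simp: ucover_def)

lemma w_bounds: assumes "u \<in> V" "v \<in> V" shows "0 \<le> w u v" "w u v \<le> 1"
proof -
  have "2 \<le> d u" "2 \<le> d v" using assms d_ge2 by auto
  then have "(2::real) * 2 \<le> real (d u) * real (d v)" by (intro mult_mono) auto
  then have "(1::real) \<le> real (d u) * real (d v)" by simp
  then have "1 \<le> sqrt (real (d u) * real (d v))" by simp
  then show "0 \<le> w u v" "w u v \<le> 1" by (auto simp: w0_def)
qed

lemma Nb_sum:
  assumes "\<And>y. y \<notin> CM M \<Longrightarrow> h y = 0" "x \<in> C"
  shows "(\<Sum>y\<in>Nb x. h y) = (\<Sum>y\<in>CM M. if cover_adj x y then h y else 0)"
proof -
  have "(\<Sum>y\<in>Nb x. h y) = (\<Sum>y\<in>Nb x. if cover_adj x y then h y else 0)"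
    by (auto simp: Nb_def intro!: sum.cong)
  also have "\<dots> = (\<Sum>y\<in>Nb x \<union> CM M. if cover_adj x y then h y else 0)"
    using assms by (intro sum.mono_neutral_left finite_UnI finite_Nb finite_CM)
      (auto simp: Nb_def CM_def)
  also have "\<dots> = (\<Sum>y\<in>CM M. if cover_adj x y then h y else 0)"
    using assms by (intro sum.mono_neutral_right finite_UnI finite_Nb finite_CM)
      (auto simp: Nb_def CM_def)
  finally show ?thesis .
qed

definition Kc :: real where "Kc = real (card V + 1)"

lemma Kc_pos: "Kc > 0" by (simp add: Kc_def)

lemma A_bound:
  assumes g: "supp_fun g \<subseteq> CM M"
  shows "(\<Sum>x\<in>CM (Suc M). (A g x)\<^sup>2) \<le> Kc\<^sup>2 * (\<Sum>x\<in>CM M. (g x)\<^sup>2)"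
proof -
  have g0: "\<And>y. y \<notin> CM M \<Longrightarrow> g y = 0" using g by (auto simp: supp_fun_def)
  have pt: "(A g x)\<^sup>2 \<le> Kc * (\<Sum>y\<in>CM M. if cover_adj x y then (g y)\<^sup>2 else 0)"
    if x: "x \<in> CM (Suc M)" for x
  proof -
    have xC: "x \<in> C" using x by (simp add: CM_def)
    have "(A g x)\<^sup>2 = (\<Sum>y\<in>Nb x. w (last x) (last y) * g y)\<^sup>2" using A_in[OF xC] by simp
    also have "\<dots> \<le> (\<Sum>y\<in>Nb x. (w (last x) (last y) * g y)\<^sup>2) * card (Nb x)"
      by (rule sum_squared_le_sum_of_squares)
    also have "\<dots> \<le> (\<Sum>y\<in>Nb x. (g y)\<^sup>2) * Kc"
    proof (rule mult_mono)
      show "(\<Sum>y\<in>Nb x. (w (last x) (last y) * g y)\<^sup>2) \<le> (\<Sum>y\<in>Nb x. (g y)\<^sup>2)"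
      proof (rule sum_mono)
        fix y assume y: "y \<in> Nb x"
        then have "last y \<in> V" using last_C by (auto simp: Nb_def)
        then have wb: "0 \<le> w (last x) (last y)" "w (last x) (last y) \<le> 1"
          using w_bounds last_C[OF xC] by auto
        have "(w (last x) (last y))\<^sup>2 \<le> 1" using wb by (simp add: abs_le_iff power_le_one)
        then have "(w (last x) (last y))\<^sup>2 * (g y)\<^sup>2 \<le> 1 * (g y)\<^sup>2"
          by (intro mult_right_mono) auto
        then show "(w (last x) (last y) * g y)\<^sup>2 \<le> (g y)\<^sup>2" by (simp add: power_mult_distrib)
      qed
      show "real (card (Nb x)) \<le> Kc" using card_Nb[OF xC] by (simp add: Kc_def)
    qed (auto simp: sum_nonneg)
    also have "\<dots> = Kc * (\<Sum>y\<in>CM M. if cover_adj x y then (g y)\<^sup>2 else 0)"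
      using Nb_sum[of M "\<lambda>y. (g y)\<^sup>2", OF _ xC] g0 by simp
    finally show ?thesis .
  qed
  have "(\<Sum>x\<in>CM (Suc M). (A g x)\<^sup>2) \<le>
      (\<Sum>x\<in>CM (Suc M). Kc * (\<Sum>y\<in>CM M. if cover_adj x y then (g y)\<^sup>2 else 0))"
    using pt by (rule sum_mono)
  also have "\<dots> = Kc * (\<Sum>y\<in>CM M. \<Sum>x\<in>CM (Suc M). if cover_adj x y then (g y)\<^sup>2 else 0)"
    by (simp add: sum_distrib_left[symmetric] sum.swap[of _ "CM (Suc M)"])
  also have "\<dots> \<le> Kc * (\<Sum>y\<in>CM M. Kc * (g y)\<^sup>2)"
  proof (intro mult_left_mono sum_mono)
    fix y assume y: "y \<in> CM M"
    then have yC: "y \<in> C" by (simp add: CM_def)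
    have "(\<Sum>x\<in>CM (Suc M). if cover_adj x y then (g y)\<^sup>2 else 0)
        = (\<Sum>x\<in>{x\<in>CM (Suc M). cover_adj x y}. (g y)\<^sup>2)"
      using sum.inter_filter[OF finite_CM[of "Suc M"], of "\<lambda>x. (g y)\<^sup>2" "\<lambda>x. cover_adj x y"]
      by simp
    also have "\<dots> = real (card {x\<in>CM (Suc M). cover_adj x y}) * (g y)\<^sup>2" by simp
    also have "\<dots> \<le> Kc * (g y)\<^sup>2"
    proof (intro mult_right_mono)
      have "{x\<in>CM (Suc M). cover_adj x y} \<subseteq> Nb y" by (auto simp: Nb_def CM_def adj_sym)
      then have "card {x\<in>CM (Suc M). cover_adj x y} \<le> card (Nb y)"
        by (intro card_mono finite_Nb yC)
      then show "real (card {x\<in>CM (Suc M). cover_adj x y}) \<le> Kc"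
        using card_Nb[OF yC] by (simp add: Kc_def)
    qed auto
    finally show "(\<Sum>x\<in>CM (Suc M). if cover_adj x y then (g y)\<^sup>2 else 0) \<le> Kc * (g y)\<^sup>2" .
  qed (use Kc_pos in auto)
  also have "\<dots> = Kc\<^sup>2 * (\<Sum>x\<in>CM M. (g x)\<^sup>2)"
    by (simp add: sum_distrib_left power2_eq_square mult.assoc)
  finally show ?thesis .
qed

lemma A_norm_bound:
  assumes g: "supp_fun g \<subseteq> CM M"
  shows "l2norm (A g) \<le> Kc * l2norm g"
proof -
  have "l2norm (A g) = sqrt (\<Sum>x\<in>CM (Suc M). (A g x)\<^sup>2)"
    using l2norm_on[OF finite_CM supp_A[OF g]] .
  also have "\<dots> \<le> sqrt (Kc\<^sup>2 * (\<Sum>x\<in>CM M. (g x)\<^sup>2))" using A_bound[OF g] by simp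
  also have "\<dots> = Kc * l2norm g"
    using l2norm_on[OF finite_CM g] Kc_pos by (simp add: real_sqrt_mult)
  finally show ?thesis .
qed

lemma pow_norm_bound:
  assumes g: "supp_fun g \<subseteq> CM M"
  shows "l2norm ((A ^^ k) g) \<le> Kc ^ k * l2norm g"
proof (induction k)
  case 0 then show ?case by simp
next
  case (Suc k)
  have "l2norm ((A ^^ Suc k) g) = l2norm (A ((A ^^ k) g))" by simp
  also have "\<dots> \<le> Kc * l2norm ((A ^^ k) g)" using A_norm_bound[OF supp_pow[OF g]] .
  also have "\<dots> \<le> Kc * (Kc ^ k * l2norm g)" using Suc Kc_pos by (intro mult_left_mono) auto
  finally show ?case by simp
qed

lemma finite_sub_CM: assumes "finite F" "F \<subseteq> C" shows "\<exists>M. F \<subseteq> CM M"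
proof -
  obtain M where "\<forall>n\<in>length ` F. n \<le> M"
    using assms(1) finite_nat_set_iff_bounded_le by (metis finite_imageI)
  then show ?thesis using assms(2) by (auto simp: CM_def)
qed

lemma l2norm_pos: assumes "f \<in> finsupp_vecs C" shows "l2norm f > 0"
proof -
  from assms have fin: "finite (supp_fun f)" and ne: "supp_fun f \<noteq> {}"
    by (auto simp: finsupp_vecs_def)
  obtain x where x: "x \<in> supp_fun f" using ne by blast
  have "0 < (\<Sum>x\<in>supp_fun f. (f x)\<^sup>2)"
    using x fin by (intro sum_pos2[where i=x]) (auto simp: supp_fun_def)
  then show ?thesis by (simp add: l2norm_def)
qed

lemma bdd: "bdd_above ((\<lambda>f. l2norm ((A ^^ k) f) / l2norm f) ` finsupp_vecs C)"
proof (rule bdd_aboveI2)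
  fix f assume f: "f \<in> finsupp_vecs C"
  then have "finite (supp_fun f)" "supp_fun f \<subseteq> C" by (auto simp: finsupp_vecs_def)
  then obtain M where M: "supp_fun f \<subseteq> CM M"
    using finite_sub_CM by blast
  have "l2norm ((A ^^ k) f) \<le> Kc ^ k * l2norm f" using pow_norm_bound[OF M] .
  then show "l2norm ((A ^^ k) f) / l2norm f \<le> Kc ^ k"
    using l2norm_pos[OF f] by (simp add: divide_le_eq)
qed

lemma pow_norm_ge:
  assumes "f \<in> finsupp_vecs C"
  shows "l2norm ((A ^^ k) f) / l2norm f \<le> cover_pow_norm V E v0 k"
  unfolding cover_pow_norm_def using assms bdd by (rule cSUP_upper)

end

context G begin

definition R :: "('a \<times> 'a) set" where
  "R = {(a, b). \<exists>x\<in>C. 2 \<le> length x \<and> last x = b \<and> last (butlast x) = a}"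

lemma C_last2: assumes "x \<in> C" "2 \<le> length x" shows "E (last (butlast x)) (last x)"
proof -
  have e: "x = butlast x @ [last x]" using assms(2) by (cases x rule: rev_cases) auto
  have ne: "butlast x \<noteq> []" using assms(2) by (cases x rule: rev_cases) auto
  have hx: "nbw E x" using assms(1) by (simp add: ucover_nbw)
  have "nbw E (butlast x @ [last x])" using hx by (simp only: e[symmetric])
  then show ?thesis using ne by (simp add: nbw_snoc)
qed

lemma R_E: "(a, b) \<in> R \<Longrightarrow> E a b"
  using C_last2 by (auto simp: R_def)

lemma R_fwd: assumes "(a, b) \<in> R" "E b c" "c \<noteq> a" shows "(b, c) \<in> R"
proof -
  obtain x where x: "x \<in> C" "2 \<le> length x" "last x = b" "last (butlast x) = a"
    using assms(1) by (auto simp: R_def)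
  then have "x @ [c] \<in> C" using assms C_snoc by auto
  moreover have "2 \<le> length (x @ [c])" using x by simp
  ultimately have "\<exists>z\<in>C. 2 \<le> length z \<and> last z = c \<and> last (butlast z) = b"
    using x by (intro bexI[where x="x @ [c]"]) auto
  then show ?thesis by (simp add: R_def)
qed

lemma R_start: assumes "E v0 q" shows "(v0, q) \<in> R"
proof -
  have "[v0, q] \<in> C" using assms by (simp add: ucover_nbw nbw_two)
  then have "\<exists>z\<in>C. 2 \<le> length z \<and> last z = q \<and> last (butlast z) = v0"
    by (intro bexI[where x="[v0, q]"]) auto
  then show ?thesis by (simp add: R_def)
qed

definition Iset :: "'a \<Rightarrow> 'a set" where "Iset b = {a\<in>V. (a, b) \<in> R}"
definition Oset :: "'a \<Rightarrow> 'a set" where "Oset b = {c\<in>V. (b, c) \<in> R}"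

lemma Iset_nb: "Iset b \<subseteq> nb b" using R_E E_sym by (auto simp: Iset_def nb_def)
lemma Oset_nb: "Oset b \<subseteq> nb b" using R_E by (auto simp: Oset_def nb_def)

lemma in_le_out: assumes b: "b \<in> V" shows "card (Iset b) \<le> card (Oset b)"
proof -
  have finO: "finite (Oset b)" using finV by (simp add: Oset_def)
  consider "Iset b = {}" | a where "Iset b = {a}" | a1 a2 where "a1 \<in> Iset b" "a2 \<in> Iset b" "a1 \<noteq> a2"
    by blast
  then show ?thesis
  proof cases
    case 1 then show ?thesis by simp
  next
    case 2
    then have a: "(a, b) \<in> R" "a \<in> nb b" using Iset_nb by (auto simp: Iset_def)
    have "nb b - {a} \<subseteq> Oset b" using R_fwd[OF a(1)] by (auto simp: Oset_def nb_def)
    then have "card (nb b - {a}) \<le> card (Oset b)" using finO by (rule card_mono[rotated])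
    moreover have "card (nb b - {a}) = d b - 1" using a finite_nb d_nb by simp
    moreover have "2 \<le> d b" using d_ge2 b by simp
    ultimately show ?thesis using 2 by simp
  next
    case 3
    have "nb b \<subseteq> Oset b"
    proof
      fix c assume c: "c \<in> nb b"
      show "c \<in> Oset b"
      proof (cases "c = a1")
        case True
        then have "c \<noteq> a2" using 3 by simp
        then show ?thesis using R_fwd[of a2 b c] 3 c by (auto simp: Iset_def Oset_def nb_def)
      next
        case False
        then show ?thesis using R_fwd[of a1 b c] 3 c by (auto simp: Iset_def Oset_def nb_def)
      qed
    qed
    then have "card (nb b) \<le> card (Oset b)" using finO by (rule card_mono[rotated])
    moreover have "card (Iset b) \<le> card (nb b)" using Iset_nb finite_nb by (rule card_mono[rotated])
    ultimately show ?thesis by simp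
  qed
qed

lemma sum_in_out: "(\<Sum>b\<in>V. card (Iset b)) = (\<Sum>b\<in>V. card (Oset b))"
proof -
  have "(\<Sum>b\<in>V. card (Iset b)) = (\<Sum>b\<in>V. \<Sum>a\<in>V. if (a, b) \<in> R then 1 else 0)"
    unfolding Iset_def using finV by (simp add: sum.inter_filter[symmetric])
  also have "\<dots> = (\<Sum>a\<in>V. \<Sum>b\<in>V. if (a, b) \<in> R then 1 else 0)" by (rule sum.swap)
  also have "\<dots> = (\<Sum>b\<in>V. card (Oset b))"
    unfolding Oset_def using finV by (simp add: sum.inter_filter[symmetric])
  finally show ?thesis .
qed

lemma in_eq_out: assumes "b \<in> V" shows "card (Iset b) = card (Oset b)"
proof (rule ccontr)
  assume "card (Iset b) \<noteq> card (Oset b)"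
  then have "card (Iset b) < card (Oset b)" using in_le_out[OF assms] by simp
  then have "(\<Sum>b\<in>V. card (Iset b)) < (\<Sum>b\<in>V. card (Oset b))"
    using finV in_le_out assms by (intro sum_strict_mono_ex1) auto
  then show False using sum_in_out by simp
qed

definition full :: "'a \<Rightarrow> bool" where "full x \<longleftrightarrow> (\<forall>y. E x y \<longrightarrow> (x, y) \<in> R \<and> (y, x) \<in> R)"

lemma full_of_out: assumes "x \<in> V" "nb x \<subseteq> Oset x" shows "full x"
proof -
  have O: "Oset x = nb x" using assms Oset_nb by auto
  have "card (Iset x) = card (nb x)" using in_eq_out[OF assms(1)] O by simp
  then have "Iset x = nb x" using Iset_nb finite_nb by (simp add: card_subset_eq)
  then show ?thesis using O unfolding full_def Iset_def Oset_def nb_def using E_V E_sym by blast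
qed

lemma full_v0: "full v0"
  using v0V R_start E_V by (intro full_of_out) (auto simp: nb_def Oset_def)

lemma full_step: assumes "full x" "E x y" shows "full y"
proof (rule full_of_out)
  show "y \<in> V" using assms E_V by auto
  have xy: "(x, y) \<in> R" "(y, x) \<in> R" using assms by (auto simp: full_def)
  show "nb y \<subseteq> Oset y"
  proof
    fix c assume c: "c \<in> nb y"
    show "c \<in> Oset y"
    proof (cases "c = x")
      case True then show ?thesis using xy c by (auto simp: Oset_def nb_def)
    next
      case False then show ?thesis using R_fwd[OF xy(1)] c by (auto simp: Oset_def nb_def)
    qed
  qed
qed

lemma R_all: assumes "E a b" shows "(a, b) \<in> R"
proof -
  have a: "a \<in> V" using assms E_V by auto
  have "(v0, a) \<in> {(x, y). E x y}\<^sup>*" using conn v0V a by (auto simp: connected_graph_def)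
  then have "full a"
  proof (induction rule: rtrancl_induct)
    case base then show ?case by (rule full_v0)
  next
    case (step y z) then show ?case using full_step by auto
  qed
  then show ?thesis using assms by (auto simp: full_def)
qed

end

context G begin

lemma nbw_set2: assumes "nbw E xs" "2 \<le> length xs" shows "set xs \<subseteq> V"
proof
  fix z assume "z \<in> set xs"
  then obtain i where i: "i < length xs" "z = xs ! i" by (auto simp: in_set_conv_nth)
  show "z \<in> V"
  proof (cases "Suc i < length xs")
    case True
    then have "E (xs ! i) (xs ! Suc i)" using assms(1) by (simp add: nbw_def)
    then show ?thesis using i E_V by auto
  next
    case False
    then have j: "Suc (i - 1) < length xs" "Suc (i - 1) = i" using i assms(2) by auto
    then have "E (xs ! (i - 1)) (xs ! Suc (i - 1))" using assms(1) unfolding nbw_def by blast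
    then show ?thesis using i j E_V by auto
  qed
qed

lemma nbw_last2: assumes "nbw E xs" "2 \<le> length xs" shows "E (last (butlast xs)) (last xs)"
proof -
  have e: "xs = butlast xs @ [last xs]" using assms(2) by (cases xs rule: rev_cases) auto
  have ne: "butlast xs \<noteq> []" using assms(2) by (cases xs rule: rev_cases) auto
  have "nbw E (butlast xs @ [last xs])" using assms(1) by (simp only: e[symmetric])
  then show ?thesis using ne by (simp add: nbw_snoc)
qed

definition Zs :: "'a \<Rightarrow> 'a \<Rightarrow> nat \<Rightarrow> 'a list set" where
  "Zs a b L = {zs. length zs = L \<and> nbw E (a # b # zs)}"

definition Val :: "'a \<Rightarrow> 'a \<Rightarrow> 'a list \<Rightarrow> 'a set" where
  "Val a b zs = {c\<in>V. E (last (b # zs)) c \<and> c \<noteq> last (butlast (a # b # zs))}"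

lemma set_Zs: "zs \<in> Zs a b L \<Longrightarrow> set (a # b # zs) \<subseteq> V"
  using nbw_set2[of "a # b # zs"] by (auto simp: Zs_def)

lemma finite_Zs: "finite (Zs a b L)"
proof -
  have "Zs a b L \<subseteq> {zs. set zs \<subseteq> V \<and> length zs \<le> L}" using set_Zs by (auto simp: Zs_def)
  then show ?thesis using finite_lists_length_le[OF finV] finite_subset by blast
qed

lemma finite_Val: "finite (Val a b zs)" using finV by (simp add: Val_def)

lemma Zs_0: "E a b \<Longrightarrow> Zs a b 0 = {[]}"
  by (auto simp: Zs_def nbw_two)

lemma nbw_snoc3:
  "nbw E (a # b # zs @ [c]) \<longleftrightarrow> nbw E (a # b # zs) \<and> E (last (b # zs)) c
     \<and> last (butlast (a # b # zs)) \<noteq> c"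
  using nbw_snoc[of E "a # b # zs" c] by simp

lemma Zs_Suc: "Zs a b (Suc L) = (\<lambda>(zs, c). zs @ [c]) ` (SIGMA zs:Zs a b L. Val a b zs)"
proof
  show "Zs a b (Suc L) \<subseteq> (\<lambda>(zs, c). zs @ [c]) ` (SIGMA zs:Zs a b L. Val a b zs)"
  proof
    fix zs' assume z: "zs' \<in> Zs a b (Suc L)"
    then obtain zs c where e: "zs' = zs @ [c]" by (cases zs' rule: rev_cases) (auto simp: Zs_def)
    have "nbw E (a # b # zs @ [c])" using z e by (simp add: Zs_def)
    then have "nbw E (a # b # zs)" "E (last (b # zs)) c" "last (butlast (a # b # zs)) \<noteq> c"
      by (auto simp: nbw_snoc3)
    moreover have "length zs = L" using z e by (simp add: Zs_def)
    ultimately have "zs \<in> Zs a b L" "c \<in> Val a b zs" using E_V by (auto simp: Zs_def Val_def)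
    then show "zs' \<in> (\<lambda>(zs, c). zs @ [c]) ` (SIGMA zs:Zs a b L. Val a b zs)" using e by force
  qed
next
  show "(\<lambda>(zs, c). zs @ [c]) ` (SIGMA zs:Zs a b L. Val a b zs) \<subseteq> Zs a b (Suc L)"
    by (auto simp: Zs_def Val_def nbw_snoc3)
qed

lemma sum_Zs_Suc:
  "(\<Sum>zs\<in>Zs a b (Suc L). g zs) = (\<Sum>zs\<in>Zs a b L. \<Sum>c\<in>Val a b zs. g (zs @ [c]))"
proof -
  have inj: "inj_on (\<lambda>(zs, c). zs @ [c]) (SIGMA zs:Zs a b L. Val a b zs)"
    by (auto simp: inj_on_def)
  have "(\<Sum>zs\<in>Zs a b (Suc L). g zs) = (\<Sum>p\<in>(SIGMA zs:Zs a b L. Val a b zs). g ((\<lambda>(zs, c). zs @ [c]) p))"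
    unfolding Zs_Suc by (rule sum.reindex[OF inj, unfolded comp_def])
  also have "\<dots> = (\<Sum>zs\<in>Zs a b L. \<Sum>c\<in>Val a b zs. g (zs @ [c]))"
    by (subst sum.Sigma[OF finite_Zs]) (auto simp: finite_Val split_def)
  finally show ?thesis .
qed

lemma card_Val: assumes "zs \<in> Zs a b L" shows "card (Val a b zs) = d (last (b # zs)) - 1"
proof -
  have w: "nbw E (a # b # zs)" using assms by (simp add: Zs_def)
  then have "E (last (butlast (a # b # zs))) (last (a # b # zs))" by (rule nbw_last2) simp
  then have p: "last (butlast (a # b # zs)) \<in> nb (last (b # zs))"
    using E_sym E_V by (auto simp: nb_def)
  have "Val a b zs = nb (last (b # zs)) - {last (butlast (a # b # zs))}"
    by (auto simp: Val_def nb_def)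
  then show ?thesis using p finite_nb d_nb by simp
qed

definition Q :: "'a \<Rightarrow> 'a list \<Rightarrow> real" where
  "Q b zs = prod_list (map (\<lambda>v. 1 / (real (d v) - 1)) (butlast (b # zs)))"

lemma Q_Nil[simp]: "Q b [] = 1" by (simp add: Q_def)

lemma Q_snoc: "Q b (zs @ [c]) = Q b zs / (real (d (last (b # zs))) - 1)"
proof -
  have "butlast (b # zs @ [c]) = b # zs" by (simp add: butlast_append)
  moreover have "b # zs = butlast (b # zs) @ [last (b # zs)]" by simp
  ultimately have "butlast (b # zs @ [c]) = butlast (b # zs) @ [last (b # zs)]" by simp
  then show ?thesis by (simp add: Q_def)
qed

lemma prod_list_pos: "(\<And>v. v \<in> set l \<Longrightarrow> v \<in> V) \<Longrightarrow> 0 < prod_list (map (\<lambda>v. 1 / (real (d v) - 1)) l)"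
proof (induction l)
  case Nil then show ?case by simp
next
  case (Cons v l)
  have "2 \<le> d v" using Cons.prems d_ge2 by simp
  then have "0 < 1 / (real (d v) - 1)" by simp
  then show ?case using Cons by simp
qed

lemma Q_pos: "set (b # zs) \<subseteq> V \<Longrightarrow> 0 < Q b zs"
  unfolding Q_def by (rule prod_list_pos) (meson in_set_butlastD subsetD)

definition Bop :: "('a \<Rightarrow> 'a \<Rightarrow> real) \<Rightarrow> 'a \<Rightarrow> 'a \<Rightarrow> real" where
  "Bop h p q = (\<Sum>c\<in>V. if E q c \<and> c \<noteq> p then h q c / (real (d q) - 1) else 0)"

definition Sl :: "'a \<Rightarrow> 'a \<Rightarrow> nat \<Rightarrow> ('a \<Rightarrow> 'a \<Rightarrow> real) \<Rightarrow> real" where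
  "Sl a b L h = (\<Sum>zs\<in>Zs a b L. Q b zs * h (last (butlast (a # b # zs))) (last (b # zs)))"

lemma Sl_0: "E a b \<Longrightarrow> Sl a b 0 h = h a b"
  by (simp add: Sl_def Zs_0)

lemma Sl_Suc: "Sl a b (Suc L) h = Sl a b L (Bop h)"
proof -
  have "Sl a b (Suc L) h = (\<Sum>zs\<in>Zs a b L. \<Sum>c\<in>Val a b zs.
      Q b zs / (real (d (last (b # zs))) - 1) * h (last (b # zs)) c)"
    unfolding Sl_def sum_Zs_Suc by (simp add: Q_snoc butlast_append)
  also have "\<dots> = (\<Sum>zs\<in>Zs a b L. Q b zs * Bop h (last (butlast (a # b # zs))) (last (b # zs)))"
  proof (rule sum.cong[OF refl])
    fix zs assume "zs \<in> Zs a b L"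
    have "Bop h (last (butlast (a # b # zs))) (last (b # zs))
        = (\<Sum>c\<in>Val a b zs. h (last (b # zs)) c / (real (d (last (b # zs))) - 1))"
      unfolding Bop_def Val_def using finV
      by (subst sum.inter_filter[symmetric]) (auto intro!: sum.cong)
    then show "(\<Sum>c\<in>Val a b zs. Q b zs / (real (d (last (b # zs))) - 1) * h (last (b # zs)) c)
        = Q b zs * Bop h (last (butlast (a # b # zs))) (last (b # zs))"
      by (simp add: sum_distrib_left)
  qed
  finally show ?thesis by (simp add: Sl_def)
qed

definition D :: "('a \<times> 'a) set" where "D = {(a, b). E a b}"

lemma D_Sigma: "D = (SIGMA a:V. {b\<in>V. E a b})" using E_V by (auto simp: D_def)
lemma finite_D: "finite D" unfolding D_Sigma using finV by auto

lemma sum_D: "(\<Sum>(a, b)\<in>D. f a b) = (\<Sum>a\<in>V. \<Sum>b\<in>V. if E a b then f a b else 0)"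
  unfolding D_Sigma using finV
  by (subst sum.Sigma[symmetric]) (auto simp: sum.inter_filter)

lemma Tot_Bop: "(\<Sum>(a, b)\<in>D. Bop h a b) = (\<Sum>(a, b)\<in>D. h a b)"
proof -
  have "(\<Sum>(a, b)\<in>D. Bop h a b) = (\<Sum>a\<in>V. \<Sum>b\<in>V. \<Sum>c\<in>V.
      if E a b \<and> E b c \<and> c \<noteq> a then h b c / (real (d b) - 1) else 0)"
    unfolding sum_D Bop_def by (auto intro!: sum.cong)
  also have "\<dots> = (\<Sum>b\<in>V. \<Sum>a\<in>V. \<Sum>c\<in>V.
      if E a b \<and> E b c \<and> c \<noteq> a then h b c / (real (d b) - 1) else 0)"
    by (rule sum.swap)
  also have "\<dots> = (\<Sum>b\<in>V. \<Sum>c\<in>V. \<Sum>a\<in>V.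
      if E a b \<and> E b c \<and> c \<noteq> a then h b c / (real (d b) - 1) else 0)"
    by (rule sum.cong[OF refl], rule sum.swap)
  also have "\<dots> = (\<Sum>b\<in>V. \<Sum>c\<in>V. if E b c then h b c else 0)"
  proof (intro sum.cong[OF refl])
    fix b c assume b: "b \<in> V" and c: "c \<in> V"
    show "(\<Sum>a\<in>V. if E a b \<and> E b c \<and> c \<noteq> a then h b c / (real (d b) - 1) else 0)
        = (if E b c then h b c else 0)"
    proof (cases "E b c")
      case False then show ?thesis by simp
    next
      case True
      have "(\<Sum>a\<in>V. if E a b \<and> E b c \<and> c \<noteq> a then h b c / (real (d b) - 1) else 0)
          = (\<Sum>a\<in>{a\<in>V. E a b \<and> c \<noteq> a}. h b c / (real (d b) - 1))"
        using True finV by (subst sum.inter_filter) auto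
      also have "{a\<in>V. E a b \<and> c \<noteq> a} = nb b - {c}" using E_sym by (auto simp: nb_def)
      also have "(\<Sum>a\<in>nb b - {c}. h b c / (real (d b) - 1)) = real (d b - 1) * (h b c / (real (d b) - 1))"
        using True c finite_nb d_nb E_V by (simp add: nb_def)
      finally have "(\<Sum>a\<in>V. if E a b \<and> E b c \<and> c \<noteq> a then h b c / (real (d b) - 1) else 0)
          = real (d b - 1) * (h b c / (real (d b) - 1))" by simp
      moreover have "2 \<le> d b" using b d_ge2 by simp
      ultimately show ?thesis using True by (simp add: of_nat_diff)
    qed
  qed
  also have "\<dots> = (\<Sum>(a, b)\<in>D. h a b)" unfolding sum_D ..
  finally show ?thesis .
qed

lemma TS: "(\<Sum>(a, b)\<in>D. Sl a b L h) = (\<Sum>(a, b)\<in>D. h a b)"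
proof (induction L arbitrary: h)
  case 0
  then show ?case by (intro sum.cong) (auto simp: D_def Sl_0)
next
  case (Suc L)
  then show ?case by (simp add: Sl_Suc Tot_Bop)
qed

lemma Tot_deg: "(\<Sum>(a, b)\<in>D. g b) = (\<Sum>b\<in>V. real (d b) * g b)"
proof -
  have "(\<Sum>(a, b)\<in>D. g b) = (\<Sum>b\<in>V. \<Sum>a\<in>V. if E a b then g b else 0)"
    unfolding sum_D by (rule sum.swap)
  also have "\<dots> = (\<Sum>b\<in>V. real (d b) * g b)"
  proof (rule sum.cong[OF refl])
    fix b assume "b \<in> V"
    have "(\<Sum>a\<in>V. if E a b then g b else 0) = (\<Sum>a\<in>{a\<in>V. E a b}. g b)"
      using finV by (subst sum.inter_filter) auto
    also have "{a\<in>V. E a b} = nb b" using E_sym by (auto simp: nb_def)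
    finally show "(\<Sum>a\<in>V. if E a b then g b else 0) = real (d b) * g b" by (simp add: d_nb)
  qed
  finally show ?thesis .
qed

end

lemma alg1:
  fixes Q dq dc :: real
  assumes "0 \<le> Q" "2 \<le> dq" "2 \<le> dc"
  shows "sqrt (Q * dq) * (1 / sqrt (dq * dc) * sqrt (Q / (dq - 1) * dc)) = Q / sqrt (dq - 1)"
proof -
  have p: "sqrt dq > 0" "sqrt dc > 0" "sqrt (dq - 1) > 0" using assms by auto
  have "sqrt (Q * dq) * (1 / sqrt (dq * dc) * sqrt (Q / (dq - 1) * dc))
      = (sqrt Q * sqrt Q) * (sqrt dq * sqrt dc) / (sqrt dq * sqrt dc * sqrt (dq - 1))"
    by (simp add: real_sqrt_mult real_sqrt_divide)
  also have "\<dots> = Q / sqrt (dq - 1)" using p assms(1) by (simp add: field_simps)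
  finally show ?thesis .
qed

lemma alg2:
  fixes Q dq :: real
  assumes "2 \<le> dq"
  shows "(dq - 1) * (Q / sqrt (dq - 1)) = Q * sqrt (dq - 1)"
proof -
  have p: "sqrt (dq - 1) > 0" using assms by auto
  have "dq - 1 = sqrt (dq - 1) * sqrt (dq - 1)" using assms by simp
  then show ?thesis using p by (metis (no_types, lifting) mult.commute nonzero_mult_div_cancel_left
        order_less_irrefl times_divide_eq_right)
qed

context G begin

definition xe :: "'a \<Rightarrow> 'a \<Rightarrow> 'a list" where
  "xe a b = (SOME x. x \<in> C \<and> 2 \<le> length x \<and> last x = b \<and> last (butlast x) = a)"

lemma xe: assumes "E a b"
  shows "xe a b \<in> C" "2 \<le> length (xe a b)" "last (xe a b) = b" "last (butlast (xe a b)) = a"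
proof -
  have "\<exists>x. x \<in> C \<and> 2 \<le> length x \<and> last x = b \<and> last (butlast x) = a"
    using R_all[OF assms] by (auto simp: R_def)
  then have "xe a b \<in> C \<and> 2 \<le> length (xe a b) \<and> last (xe a b) = b \<and> last (butlast (xe a b)) = a"
    unfolding xe_def by (rule someI_ex)
  then show "xe a b \<in> C" "2 \<le> length (xe a b)" "last (xe a b) = b" "last (butlast (xe a b)) = a"
    by auto
qed

lemma xe_app_C: assumes "E a b" shows "xe a b @ zs \<in> C \<longleftrightarrow> nbw E (a # b # zs)"
proof -
  have x: "xe a b \<noteq> []" "hd (xe a b) = v0" "nbw E (xe a b)" using xe[OF assms]
    by (auto simp: ucover_nbw)
  have "nbw E (xe a b @ zs) \<longleftrightarrow> nbw E (xe a b) \<and> nbw E (a # b # zs)"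
    using xe[OF assms] by (intro nbw_append) auto
  then show ?thesis using x by (simp add: ucover_nbw)
qed

lemma last_app: assumes "E a b"
  shows "last (xe a b @ zs) = last (b # zs)"
    "last (butlast (xe a b @ zs)) = last (butlast (a # b # zs))"
proof -
  note x = xe[OF assms]
  have ne: "xe a b \<noteq> []" using x(2) by auto
  show "last (xe a b @ zs) = last (b # zs)" using x ne by (cases zs) auto
  show "last (butlast (xe a b @ zs)) = last (butlast (a # b # zs))"
    using x ne by (cases "zs = []") (auto simp: butlast_append)
qed

definition Zn :: "'a \<Rightarrow> 'a \<Rightarrow> nat \<Rightarrow> 'a list set" where
  "Zn a b n = {zs. length zs \<le> n \<and> nbw E (a # b # zs)}"

lemma Zn_UN: "Zn a b n = (\<Union>L\<in>{..n}. Zs a b L)"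
  by (auto simp: Zn_def Zs_def)

lemma finite_Zn: "finite (Zn a b n)" unfolding Zn_UN using finite_Zs by auto

lemma sum_Zn: "(\<Sum>zs\<in>Zn a b n. g zs) = (\<Sum>L\<le>n. \<Sum>zs\<in>Zs a b L. g zs)"
  unfolding Zn_UN by (rule sum.UNION_disjoint) (auto simp: finite_Zs[unfolded Zs_def] Zs_def)

definition phi :: "'a \<Rightarrow> 'a \<Rightarrow> 'a list \<Rightarrow> real" where
  "phi a b zs = sqrt (Q b zs * real (d (last (b # zs))))"

definition Fe :: "'a \<Rightarrow> 'a \<Rightarrow> nat \<Rightarrow> 'a list \<Rightarrow> real" where
  "Fe a b n y = (if y \<in> (\<lambda>zs. xe a b @ zs) ` Zn a b n then phi a b (drop (length (xe a b)) y) else 0)"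

lemma Fe_app: "Fe a b n (xe a b @ zs) = (if zs \<in> Zn a b n then phi a b zs else 0)"
  by (auto simp: Fe_def)

lemma Zn_V: "zs \<in> Zn a b n \<Longrightarrow> set (a # b # zs) \<subseteq> V"
  using nbw_set2[of "a # b # zs"] by (auto simp: Zn_def)

lemma phi_pos: assumes "zs \<in> Zn a b n" shows "0 < phi a b zs"
proof -
  have s: "set (a # b # zs) \<subseteq> V" using Zn_V[OF assms] .
  then have "0 < Q b zs" by (intro Q_pos) auto
  moreover have "last (b # zs) \<in> V" using s by auto
  then have "2 \<le> d (last (b # zs))" by (rule d_ge2)
  ultimately show ?thesis by (simp add: phi_def)
qed

lemma phi_sq: assumes "zs \<in> Zn a b n" shows "(phi a b zs)\<^sup>2 = Q b zs * real (d (last (b # zs)))"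
proof -
  have s: "set (a # b # zs) \<subseteq> V" using Zn_V[OF assms] .
  then have "0 < Q b zs" by (intro Q_pos) auto
  then show ?thesis by (simp add: phi_def)
qed

lemma Fe_nonneg: "0 \<le> Fe a b n y"
  using phi_pos by (auto simp: Fe_def less_imp_le)

lemma supp_Fe: "supp_fun (Fe a b n) = (\<lambda>zs. xe a b @ zs) ` Zn a b n"
proof -
  have "phi a b zs \<noteq> 0" if "zs \<in> Zn a b n" for zs using phi_pos[OF that] by simp
  then show ?thesis by (auto simp: supp_fun_def Fe_def)
qed

lemma supp_Fe_CM: assumes "E a b" shows "supp_fun (Fe a b n) \<subseteq> CM (length (xe a b) + n)"
  unfolding supp_Fe using xe_app_C[OF assms] by (auto simp: CM_def Zn_def)

lemma Fe_vec: assumes "E a b" shows "Fe a b n \<in> finsupp_vecs C"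
proof -
  have "[] \<in> Zn a b n" using assms by (simp add: Zn_def nbw_two)
  then show ?thesis unfolding finsupp_vecs_def using supp_Fe_CM[OF assms] finite_Zn
    by (auto simp: supp_Fe CM_def)
qed

lemma inj_app: "inj_on (\<lambda>zs. xs @ zs) S" by (auto simp: inj_on_def)

lemma den_eq: assumes "E a b"
  shows "(\<Sum>x\<in>CM (length (xe a b) + n). (Fe a b n x)\<^sup>2) = (\<Sum>L\<le>n. Sl a b L (\<lambda>p q. real (d q)))"
proof -
  let ?T = "(\<lambda>zs. xe a b @ zs) ` Zn a b n"
  have "(\<Sum>x\<in>CM (length (xe a b) + n). (Fe a b n x)\<^sup>2) = (\<Sum>x\<in>?T. (Fe a b n x)\<^sup>2)"
    using supp_Fe_CM[OF assms] finite_CM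
    by (intro sum.mono_neutral_right) (auto simp: supp_Fe[symmetric] supp_fun_def)
  also have "\<dots> = (\<Sum>zs\<in>Zn a b n. (Fe a b n (xe a b @ zs))\<^sup>2)"
    by (rule sum.reindex[OF inj_app, unfolded comp_def])
  also have "\<dots> = (\<Sum>zs\<in>Zn a b n. Q b zs * real (d (last (b # zs))))"
    by (intro sum.cong) (auto simp: Fe_app phi_sq)
  also have "\<dots> = (\<Sum>L\<le>n. Sl a b L (\<lambda>p q. real (d q)))"
    by (simp add: sum_Zn Sl_def)
  finally show ?thesis .
qed

definition CL :: "'a \<Rightarrow> 'a \<Rightarrow> nat \<Rightarrow> real" where
  "CL a b L = (\<Sum>zs\<in>Zs a b L. \<Sum>c\<in>Val a b zs.
      phi a b zs * (w (last (b # zs)) c * phi a b (zs @ [c])))"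

definition PL :: "'a \<Rightarrow> 'a \<Rightarrow> nat \<Rightarrow> real" where
  "PL a b L = (\<Sum>zs\<in>Zs a b L.
      phi a b zs * (w (last (b # zs)) (last (butlast (a # b # zs))) * phi a b (butlast zs)))"

lemma PL_Suc: "PL a b (Suc L) = CL a b L"
  unfolding PL_def CL_def sum_Zs_Suc
  by (intro sum.cong refl) (simp add: butlast_append w0_sym)

lemma CL_eq: assumes "E a b" shows "CL a b L = Sl a b L (\<lambda>p q. sqrt (real (d q) - 1))"
  unfolding CL_def Sl_def
proof (rule sum.cong[OF refl])
  fix zs assume zs: "zs \<in> Zs a b L"
  have s: "set (a # b # zs) \<subseteq> V" using set_Zs[OF zs] .
  let ?q = "last (b # zs)"
  have qV: "?q \<in> V" using s by auto
  have dq: "2 \<le> real (d ?q)" using d_ge2[OF qV] by simp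
  have Q0: "0 \<le> Q b zs" using Q_pos[of b zs] s by auto
  have "(\<Sum>c\<in>Val a b zs. phi a b zs * (w ?q c * phi a b (zs @ [c])))
      = (\<Sum>c\<in>Val a b zs. Q b zs / sqrt (real (d ?q) - 1))"
  proof (rule sum.cong[OF refl])
    fix c assume c: "c \<in> Val a b zs"
    have dc: "2 \<le> real (d c)" using c d_ge2 by (simp add: Val_def)
    show "phi a b zs * (w ?q c * phi a b (zs @ [c])) = Q b zs / sqrt (real (d ?q) - 1)"
      unfolding phi_def w0_def using alg1[OF Q0 dq dc] by (simp add: Q_snoc)
  qed
  also have "\<dots> = real (d ?q - 1) * (Q b zs / sqrt (real (d ?q) - 1))"
    using card_Val[OF zs] by simp
  also have "\<dots> = Q b zs * sqrt (real (d ?q) - 1)"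
    using alg2[OF dq] dq by (simp add: of_nat_diff)
  finally show "(\<Sum>c\<in>Val a b zs. phi a b zs * (w ?q c * phi a b (zs @ [c])))
      = Q b zs * sqrt (real (d (last (b # zs))) - 1)" .
qed

end

context G begin

lemma AF_lb:
  assumes ab: "E a b" and zs: "zs \<in> Zs a b L" and Ln: "L \<le> n"
  shows "(if L < n then (\<Sum>c\<in>Val a b zs. w (last (b # zs)) c * phi a b (zs @ [c])) else 0)
       + (if L \<noteq> 0 then w (last (b # zs)) (last (butlast (a # b # zs))) * phi a b (butlast zs) else 0)
       \<le> A (Fe a b n) (xe a b @ zs)"
proof -
  let ?x = "xe a b @ zs"
  have xC: "?x \<in> C" using xe_app_C[OF ab] zs by (simp add: Zs_def)
  have lenzs: "length zs = L" and nbzs: "nbw E (a # b # zs)" using zs by (auto simp: Zs_def)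
  have xne: "?x \<noteq> []" using xe(2)[OF ab] by auto
  define Ch where "Ch = (if L < n then (\<lambda>c. ?x @ [c]) ` Val a b zs else {})"
  define Pa where "Pa = (if L \<noteq> 0 then {butlast ?x} else {})"
  define f where "f = (\<lambda>y. w (last ?x) (last y) * Fe a b n y)"
  have nbc: "nbw E (a # b # zs @ [c])" if "c \<in> Val a b zs" for c
  proof -
    from that have "E (last (b # zs)) c" "last (butlast (a # b # zs)) \<noteq> c" by (auto simp: Val_def)
    then show ?thesis using nbzs nbw_snoc3 by blast
  qed
  have chC: "?x @ [c] \<in> C" if "c \<in> Val a b zs" for c
    using xe_app_C[OF ab, of "zs @ [c]"] nbc[OF that] by simp
  have adjP: "cover_adj ?x (butlast ?x)"
    unfolding cover_adj_def using xne by (intro disjI2 exI[of _ "last ?x"]) simp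
  have sub: "Ch \<union> Pa \<subseteq> Nb ?x"
    using chC C_butlast[OF xC] xe(2)[OF ab] adjP
    by (auto simp: Ch_def Pa_def Nb_def cover_adj_def)
  have disj: "Ch \<inter> Pa = {}"
    by (auto simp: Ch_def Pa_def dest: arg_cong[of _ _ length])
  have nn: "\<And>y. y \<in> Nb ?x - (Ch \<union> Pa) \<Longrightarrow> 0 \<le> f y"
  proof -
    fix y assume "y \<in> Nb ?x - (Ch \<union> Pa)"
    then have "y \<in> C" by (auto simp: Nb_def)
    then have "0 \<le> w (last ?x) (last y)" using w_bounds last_C xC by auto
    then show "0 \<le> f y" using Fe_nonneg by (simp add: f_def)
  qed
  have finCh: "finite Ch" using finite_Val by (simp add: Ch_def)
  have finPa: "finite Pa" by (simp add: Pa_def)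
  have "(\<Sum>y\<in>Ch. f y) + (\<Sum>y\<in>Pa. f y) = (\<Sum>y\<in>Ch \<union> Pa. f y)"
    using sum.union_disjoint[OF finCh finPa disj, of f] by simp
  also have "\<dots> \<le> (\<Sum>y\<in>Nb ?x. f y)" by (rule sum_mono2[OF finite_Nb[OF xC] sub nn])
  also have "\<dots> = A (Fe a b n) ?x" using A_in[OF xC] by (simp add: f_def)
  finally have main: "(\<Sum>y\<in>Ch. f y) + (\<Sum>y\<in>Pa. f y) \<le> A (Fe a b n) ?x" .
  have Chs: "(\<Sum>y\<in>Ch. f y) = (if L < n then (\<Sum>c\<in>Val a b zs. w (last (b # zs)) c * phi a b (zs @ [c])) else 0)"
  proof (cases "L < n")
    case True
    have inj: "inj_on (\<lambda>c. ?x @ [c]) (Val a b zs)" by (auto simp: inj_on_def)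
    have "(\<Sum>y\<in>Ch. f y) = (\<Sum>c\<in>Val a b zs. f (?x @ [c]))"
      using True sum.reindex[OF inj, of f] by (simp add: Ch_def comp_def)
    also have "\<dots> = (\<Sum>c\<in>Val a b zs. w (last (b # zs)) c * phi a b (zs @ [c]))"
    proof (rule sum.cong[OF refl])
      fix c assume c: "c \<in> Val a b zs"
      have "zs @ [c] \<in> Zn a b n" using nbc[OF c] lenzs True by (simp add: Zn_def)
      then have "Fe a b n (xe a b @ (zs @ [c])) = phi a b (zs @ [c])" by (simp add: Fe_app)
      then show "f (?x @ [c]) = w (last (b # zs)) c * phi a b (zs @ [c])"
        using last_app(1)[OF ab, of zs] by (simp add: f_def)
    qed
    finally show ?thesis using True by simp
  qed (simp add: Ch_def)
  have Pas: "(\<Sum>y\<in>Pa. f y) = (if L \<noteq> 0 then w (last (b # zs)) (last (butlast (a # b # zs))) * phi a b (butlast zs) else 0)"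
  proof (cases "L \<noteq> 0")
    case True
    then have zne: "zs \<noteq> []" using lenzs by auto
    have bl: "butlast ?x = xe a b @ butlast zs" using zne by (simp add: butlast_append)
    have "a # b # zs = (a # b # butlast zs) @ [last zs]" using zne by simp
    then have "nbw E (a # b # butlast zs)" using nbzs nbw_append_prefix by metis
    then have "butlast zs \<in> Zn a b n" using lenzs Ln by (simp add: Zn_def)
    then have "Fe a b n (butlast ?x) = phi a b (butlast zs)" by (simp add: bl Fe_app)
    then show ?thesis using True last_app[OF ab, of zs]
      by (simp add: Pa_def f_def w0_sym)
  qed (simp add: Pa_def)
  show ?thesis using main Chs Pas by simp
qed

lemma num_ge: assumes ab: "E a b"
  shows "2 * (\<Sum>L<n. Sl a b L (\<lambda>p q. sqrt (real (d q) - 1)))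
    \<le> (\<Sum>x\<in>CM (length (xe a b) + n). Fe a b n x * A (Fe a b n) x)"
proof -
  let ?T = "(\<lambda>zs. xe a b @ zs) ` Zn a b n"
  have "(\<Sum>x\<in>CM (length (xe a b) + n). Fe a b n x * A (Fe a b n) x)
      = (\<Sum>x\<in>?T. Fe a b n x * A (Fe a b n) x)"
    using sum_supp[OF _ _ finite_CM, of "Fe a b n" ?T] supp_Fe supp_Fe_CM[OF ab] by simp
  also have "\<dots> = (\<Sum>zs\<in>Zn a b n. Fe a b n (xe a b @ zs) * A (Fe a b n) (xe a b @ zs))"
    by (rule sum.reindex[OF inj_app, unfolded comp_def])
  also have "\<dots> = (\<Sum>L\<le>n. \<Sum>zs\<in>Zs a b L. phi a b zs * A (Fe a b n) (xe a b @ zs))"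
    unfolding sum_Zn by (intro sum.cong refl) (auto simp: Fe_app Zn_def Zs_def)
  finally have e1: "(\<Sum>x\<in>CM (length (xe a b) + n). Fe a b n x * A (Fe a b n) x)
      = (\<Sum>L\<le>n. \<Sum>zs\<in>Zs a b L. phi a b zs * A (Fe a b n) (xe a b @ zs))" .
  have lev: "(if L < n then CL a b L else 0) + (if L \<noteq> 0 then PL a b L else 0)
      \<le> (\<Sum>zs\<in>Zs a b L. phi a b zs * A (Fe a b n) (xe a b @ zs))" if L: "L \<le> n" for L
  proof -
    have "(if L < n then CL a b L else 0) + (if L \<noteq> 0 then PL a b L else 0)
      = (\<Sum>zs\<in>Zs a b L. phi a b zs *
         ((if L < n then (\<Sum>c\<in>Val a b zs. w (last (b # zs)) c * phi a b (zs @ [c])) else 0)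
       + (if L \<noteq> 0 then w (last (b # zs)) (last (butlast (a # b # zs))) * phi a b (butlast zs) else 0)))"
      by (cases "L < n"; cases "L = 0")
        (simp_all add: CL_def PL_def sum_distrib_left distrib_left sum.distrib)
    also have "\<dots> \<le> (\<Sum>zs\<in>Zs a b L. phi a b zs * A (Fe a b n) (xe a b @ zs))"
    proof (rule sum_mono)
      fix zs assume zs: "zs \<in> Zs a b L"
      have "zs \<in> Zn a b n" using zs L by (auto simp: Zs_def Zn_def)
      then have "0 \<le> phi a b zs" using phi_pos less_imp_le by blast
      then show "phi a b zs *
         ((if L < n then (\<Sum>c\<in>Val a b zs. w (last (b # zs)) c * phi a b (zs @ [c])) else 0)
       + (if L \<noteq> 0 then w (last (b # zs)) (last (butlast (a # b # zs))) * phi a b (butlast zs) else 0))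
         \<le> phi a b zs * A (Fe a b n) (xe a b @ zs)"
        by (rule mult_left_mono[OF AF_lb[OF ab zs L]])
    qed
    finally show ?thesis .
  qed
  have s1: "(\<Sum>L\<le>n. if L < n then CL a b L else 0) = (\<Sum>L<n. CL a b L)"
  proof -
    have "(\<Sum>L\<le>n. if L < n then CL a b L else 0) = (\<Sum>L<Suc n. if L < n then CL a b L else 0)"
      by (simp add: lessThan_Suc_atMost)
    also have "\<dots> = (\<Sum>L<n. if L < n then CL a b L else 0)" by (simp add: sum.lessThan_Suc)
    also have "\<dots> = (\<Sum>L<n. CL a b L)" by (intro sum.cong) auto
    finally show ?thesis .
  qed
  have s2: "(\<Sum>L\<le>n. if L \<noteq> 0 then PL a b L else 0) = (\<Sum>L<n. CL a b L)"
  proof -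
    have "(\<Sum>L\<le>n. if L \<noteq> 0 then PL a b L else 0) = (\<Sum>L<Suc n. if L \<noteq> 0 then PL a b L else 0)"
      by (simp add: lessThan_Suc_atMost)
    also have "\<dots> = (\<Sum>L<n. PL a b (Suc L))" by (subst sum.lessThan_Suc_shift) simp
    also have "\<dots> = (\<Sum>L<n. CL a b L)" by (simp add: PL_Suc)
    finally show ?thesis .
  qed
  have "2 * (\<Sum>L<n. Sl a b L (\<lambda>p q. sqrt (real (d q) - 1))) = 2 * (\<Sum>L<n. CL a b L)"
    using CL_eq[OF ab] by simp
  also have "\<dots> = (\<Sum>L\<le>n. (if L < n then CL a b L else 0) + (if L \<noteq> 0 then PL a b L else 0))"
    using s1 s2 by (simp add: sum.distrib)
  also have "\<dots> \<le> (\<Sum>L\<le>n. \<Sum>zs\<in>Zs a b L. phi a b zs * A (Fe a b n) (xe a b @ zs))"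
    using lev by (intro sum_mono) auto
  also have "\<dots> = (\<Sum>x\<in>CM (length (xe a b) + n). Fe a b n x * A (Fe a b n) x)" using e1 by simp
  finally show ?thesis .
qed

end

context G begin

definition Nm :: real where "Nm = (\<Sum>u\<in>V. real (d u) * sqrt (real (d u) - 1))"
definition Dn :: real where "Dn = (\<Sum>u\<in>V. (real (d u))\<^sup>2)"

lemma Dn_pos: "0 < Dn"
proof -
  have "0 < (real (d v0))\<^sup>2" using d_ge2[OF v0V] by simp
  then show ?thesis unfolding Dn_def using finV v0V by (intro sum_pos2[where i=v0]) auto
qed

lemma Nm_nonneg: "0 \<le> Nm"
  unfolding Nm_def
proof (intro sum_nonneg)
  fix x assume "x \<in> V"
  then have "2 \<le> real (d x)" using d_ge2 by simp
  then show "0 \<le> real (d x) * sqrt (real (d x) - 1)" by simp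
qed

lemma D_ne: "D \<noteq> {}"
proof -
  have "card (nb v0) \<noteq> 0" using d_ge2[OF v0V] d_nb by simp
  then obtain q where "q \<in> nb v0" by fastforce
  then have "(v0, q) \<in> D" by (simp add: D_def nb_def)
  then show ?thesis by blast
qed

abbreviation "num a b n \<equiv> (\<Sum>x\<in>CM (length (xe a b) + n). Fe a b n x * A (Fe a b n) x)"
abbreviation "den a b n \<equiv> (\<Sum>x\<in>CM (length (xe a b) + n). (Fe a b n x)\<^sup>2)"

lemma good_edge:
  "\<exists>a b. E a b \<and> (real n / real (Suc n) * (2 * Nm / Dn)) * den a b n \<le> num a b n"
proof (rule ccontr)
  assume "\<not> ?thesis"
  then have lt: "\<And>p. p \<in> D \<Longrightarrow> num (fst p) (snd p) n
      < (real n / real (Suc n) * (2 * Nm / Dn)) * den (fst p) (snd p) n"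
    by (force simp: D_def)
  let ?r = "real n / real (Suc n) * (2 * Nm / Dn)"
  have TSs: "(\<Sum>p\<in>D. Sl (fst p) (snd p) L h) = (\<Sum>p\<in>D. h (fst p) (snd p))" for L h
    using TS[of L h] by (simp add: split_def)
  have Tdeg: "(\<Sum>p\<in>D. g (snd p)) = (\<Sum>b\<in>V. real (d b) * g b)" for g
    using Tot_deg[of g] by (simp add: split_def)
  have "2 * real n * Nm = (\<Sum>p\<in>D. 2 * (\<Sum>L<n. Sl (fst p) (snd p) L (\<lambda>p q. sqrt (real (d q) - 1))))"
  proof -
    have "(\<Sum>p\<in>D. 2 * (\<Sum>L<n. Sl (fst p) (snd p) L (\<lambda>p q. sqrt (real (d q) - 1))))
        = 2 * (\<Sum>L<n. \<Sum>p\<in>D. Sl (fst p) (snd p) L (\<lambda>p q. sqrt (real (d q) - 1)))"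
      by (simp add: sum_distrib_left[symmetric] sum.swap[of _ D])
    also have "\<dots> = 2 * (\<Sum>L<n. Nm)"
      using TSs Tdeg[of "\<lambda>q. sqrt (real (d q) - 1)"] by (simp add: Nm_def)
    finally show ?thesis by simp
  qed
  also have "\<dots> \<le> (\<Sum>p\<in>D. num (fst p) (snd p) n)"
    by (intro sum_mono num_ge) (auto simp: D_def)
  also have "\<dots> < (\<Sum>p\<in>D. ?r * den (fst p) (snd p) n)"
    using finite_D D_ne lt by (intro sum_strict_mono) auto
  also have "\<dots> = ?r * (\<Sum>p\<in>D. \<Sum>L\<le>n. Sl (fst p) (snd p) L (\<lambda>p q. real (d q)))"
    by (simp add: sum_distrib_left den_eq D_def split_def)
  also have "\<dots> = ?r * (\<Sum>L\<le>n. \<Sum>p\<in>D. Sl (fst p) (snd p) L (\<lambda>p q. real (d q)))"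
    by (simp add: sum.swap[of _ D])
  also have "\<dots> = ?r * (\<Sum>L\<le>n. Dn)"
    using TSs Tdeg[of "\<lambda>q. real (d q)"] by (simp add: Dn_def power2_eq_square)
  also have "\<dots> = 2 * real n * Nm"
  proof -
    have h: "0 < Dn + real n * Dn" using Dn_pos by (simp add: add_pos_nonneg)
    then have h': "Dn + real n * Dn \<noteq> 0" by simp
    show ?thesis using Dn_pos h' by (simp add: field_simps)
  qed
  finally show False by simp
qed

lemma root_bound:
  assumes k: "1 \<le> k"
  shows "real n / real (Suc n) * (2 * Nm / Dn) \<le> root k (cover_pow_norm V E v0 k)"
proof -
  let ?r = "real n / real (Suc n) * (2 * Nm / Dn)"
  obtain a b where ab: "E a b" and rq: "?r * den a b n \<le> num a b n" using good_edge by blast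
  have r0: "0 \<le> ?r" using Nm_nonneg Dn_pos by simp
  have vec: "Fe a b n \<in> finsupp_vecs C" by (rule Fe_vec[OF ab])
  then have ne: "supp_fun (Fe a b n) \<noteq> {}" by (simp add: finsupp_vecs_def)
  have "?r ^ k \<le> l2norm ((A ^^ k) (Fe a b n)) / l2norm (Fe a b n)"
    by (rule pow_ratio[OF supp_Fe_CM[OF ab] ne r0 rq])
  also have "\<dots> \<le> cover_pow_norm V E v0 k" by (rule pow_norm_ge[OF vec])
  finally have le: "?r ^ k \<le> cover_pow_norm V E v0 k" .
  have "?r = root k (?r ^ k)" using real_root_power_cancel[of k ?r] k r0 by simp
  also have "\<dots> \<le> root k (cover_pow_norm V E v0 k)" using k le by (simp add: real_root_le_iff)
  finally show ?thesis .
qed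

lemma main: "2 * Nm / Dn \<le> cover_spectral_radius V E v0"
  unfolding cover_spectral_radius_def
proof (rule cINF_greatest)
  show "{1::nat..} \<noteq> {}" by auto
next
  fix k :: nat assume "k \<in> {1..}"
  then have k: "1 \<le> k" by simp
  define t where "t = root k (cover_pow_norm V E v0 k)"
  define c where "c = 2 * Nm / Dn"
  have H: "real n / real (Suc n) * c \<le> t" for n using root_bound[OF k] by (simp add: t_def c_def)
  show "2 * Nm / Dn \<le> root k (cover_pow_norm V E v0 k)"
  proof (rule ccontr)
    assume "\<not> ?thesis"
    then have tc: "t < c" by (simp add: t_def c_def)
    have t0: "0 \<le> t" using H[of 0] by simp
    obtain n :: nat where n: "t / (c - t) < real n" using reals_Archimedean2 by blast
    then have "t < real n * (c - t)" using tc by (simp add: divide_less_eq mult.commute)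
    then have "t * real (Suc n) < real n * c" by (simp add: algebra_simps)
    then have "t < real n / real (Suc n) * c" by (simp add: field_simps)
    then show False using H[of n] by simp
  qed
qed

end

theorem corollary3p2:
  fixes V :: "'a set" and E :: "'a \<Rightarrow> 'a \<Rightarrow> bool" and v0 :: 'a
  assumes "simple_graph V E"
    and "connected_graph V E"
    and "\<forall>u\<in>V. deg V E u \<ge> 2"
    and "v0 \<in> V"
  shows "cover_spectral_radius V E v0 \<ge>
    2 * (\<Sum>u\<in>V. real (deg V E u) * sqrt (real (deg V E u) - 1)) / (\<Sum>u\<in>V. (real (deg V E u))\<^sup>2)"
proof -
  interpret G V E v0 using assms by unfold_locales auto
  show ?thesis using main by (simp add: Nm_def Dn_def)
qed

end
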